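(* Let $G$ be a structured quadratic-bilinear system given by $(\mathcal C,\mathcal K,\mathcal B,\mathcal N,\mathcal H)$ with structured symmetric subsystem transfer functions $G_k$, and $\widehat G$ the reduced-order system obtained by projection with $V,W\in\mathbb C^{n\times r}$ of full column rank, with reduced symmetric subsystem transfer functions $\widehat G_k$. Let $\sigma\in\mathbb C$ be such that $\mathcal C,\mathcal K,\mathcal B,\mathcal N$ can be evaluated at $\sigma,2\sigma,3\sigma$, $\mathcal H$ at $(\sigma,\sigma),(2\sigma,\sigma),(\sigma,2\sigma)$, and $\mathcal K(\sigma),\mathcal K(2\sigma),\mathcal K(3\sigma)$ are invertible; assume also that $W^{\mathsf H}\mathcal K(s)V$ is invertible for $s\in\{\sigma,2\sigma,3\sigma\}$. Define $$V_1=\mathcal K(\sigma)^{-1}\mathcal B(\sigma),\qquad V_2=\mathcal K(2\sigma)^{-1}\big(\mathcal H(\sigma,\sigma)(V_1\otimes V_1)+\mathcal N(\sigma)(I_m\otimes V_1)\big),$$ $$V_3=\mathcal K(3\sigma)^{-1}\big(\mathcal H(2\sigma,\sigma)(V_2\otimes V_1)+\mathcal H(\sigma,2\sigma)(V_1\otimes V_2)+\mathcal N(2\sigma)(I_m\otimes V_2)\big),$$ $$W_1=\mathcal K(2\sigma)^{-\mathsf H}\mathcal C(2\sigma)^{\mathsf H},\qquad W_2=\mathcal K(3\sigma)^{-\mathsf H}\mathcal C(3\sigma)^{\mathsf H}.$$ Then: (a) If $\operatorname{span}(V)\supseteq\operatorname{span}([V_1\ V_2\ V_3])$ (and $W$ is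 any full-rank matrix of the same size as $V$), then $G_1(\sigma)=\widehat G_1(\sigma)$, $G_2(\sigma,\sigma)=\widehat G_2(\sigma,\sigma)$, $G_3(\sigma,\sigma,\sigma)=\widehat G_3(\sigma,\sigma,\sigma)$. (b) If $\operatorname{span}(V)\supseteq\operatorname{span}(V_1)$ and $\operatorname{span}(W)\supseteq\operatorname{span}(W_1)$, then $G_1(\sigma)=\widehat G_1(\sigma)$, $G_1(2\sigma)=\widehat G_1(2\sigma)$, $G_2(\sigma,\sigma)=\widehat G_2(\sigma,\sigma)$. (c) If $\operatorname{span}(V)\supseteq\operatorname{span}([V_1\ V_2])$ and $\operatorname{span}(W)\supseteq\operatorname{span}(W_2)$, then $G_1(\sigma)=\widehat G_1(\sigma)$, $G_1(3\sigma)=\widehat G_1(3\sigma)$, $G_2(\sigma,\sigma)=\widehat G_2(\sigma,\sigma)$, $G_3(\sigma,\sigma,\sigma)=\widehat G_3(\sigma,\sigma,\sigma)$.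
   Context: A structured quadratic-bilinear system (in frequency domain) with $n$ states, $m$ inputs and $p$ outputs is given by matrix-valued functions $\mathcal C:\mathbb C\to\mathbb C^{p\times n}$, $\mathcal K:\mathbb C\to\mathbb C^{n\times n}$, $\mathcal B:\mathbb C\to\mathbb C^{n\times m}$, $\mathcal N:\mathbb C\to\mathbb C^{n\times nm}$ with $\mathcal N(s)=[\mathcal N_1(s)\ \cdots\ \mathcal N_m(s)]$, $\mathcal N_j(s)\in\mathbb C^{n\times n}$, and $\mathcal H:\mathbb C\times\mathbb C\to\mathbb C^{n\times n^2}$. Its structured symmetric subsystem transfer functions are $G_1(s_1)=\mathcal C(s_1)g_1(s_1)$, $G_2(s_1,s_2)=\mathcal C(s_1+s_2)g_2(s_1,s_2)$, $G_3(s_1,s_2,s_3)=\mathcal C(s_1+s_2+s_3)g_3(s_1,s_2,s_3)$, where $g_1(s_1)=\mathcal K(s_1)^{-1}\mathcal B(s_1)$, $g_2(s_1,s_2)=\tfrac12\mathcal K(s_1+s_2)^{-1}\big(\mathcal H(s_1,s_2)(g_1(s_1)\otimes g_1(s_2))+\mathcal H(s_2,s_1)(g_1(s_2)\otimes g_1(s_1))+\mathcal N(s_1)(I_m\otimes g_1(s_1))+\mathcal N(s_2)(I_m\otimes g_1(s_2))\big)$, $g_3(s_1,s_2,s_3)=\tfrac16\mathcal K(s_1+s_2+s_3)^{-1}\big(\mathcal H(s_1+s_2,s_3)(g_2(s_1,s_2)\otimes g_1(s_3))+\mathcal H(s_1+s_3,s_2)(g_2(s_1,s_3)\otimes g_1(s_2))+\mathcal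 H(s_2+s_3,s_1)(g_2(s_2,s_3)\otimes g_1(s_1))+\mathcal H(s_1,s_2+s_3)(g_1(s_1)\otimes g_2(s_2,s_3))+\mathcal H(s_2,s_1+s_3)(g_1(s_2)\otimes g_2(s_1,s_3))+\mathcal H(s_3,s_1+s_2)(g_1(s_3)\otimes g_2(s_1,s_2))+\mathcal N(s_1+s_2)(I_m\otimes g_2(s_1,s_2))+\mathcal N(s_1+s_3)(I_m\otimes g_2(s_1,s_3))+\mathcal N(s_2+s_3)(I_m\otimes g_2(s_2,s_3))\big)$, wherever the inverses exist; $\otimes$ is the Kronecker product. The reduced-order system obtained by projection with $V,W\in\mathbb C^{n\times r}$ is given by $\widehat{\mathcal C}(s)=\mathcal C(s)V$, $\widehat{\mathcal K}(s)=W^{\mathsf H}\mathcal K(s)V$, $\widehat{\mathcal B}(s)=W^{\mathsf H}\mathcal B(s)$, $\widehat{\mathcal N}(s)=W^{\mathsf H}\mathcal N(s)(I_m\otimes V)$, $\widehat{\mathcal H}(s_1,s_2)=W^{\mathsf H}\mathcal H(s_1,s_2)(V\otimes V)$, where $W^{\mathsf H}$ is the conjugate transpose and $\mathcal K(s)^{-\mathsf H}=(\mathcal K(s)^{-1})^{\mathsf H}$; its transfer functions $\widehat G_k$ are defined by the same formulas with hatted functions. *)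

theory Defs
  imports "Jordan_Normal_Form.Schur_Decomposition" "Jordan_Normal_Form.DL_Rank" "Jordan_Normal_Form.Gauss_Jordan_Elimination"
begin

definition kron :: "complex mat \<Rightarrow> complex mat \<Rightarrow> complex mat" where
  "kron A B = mat (dim_row A * dim_row B) (dim_col A * dim_col B)
     (\<lambda>(i,j). A $$ (i div dim_row B, j div dim_col B) * B $$ (i mod dim_row B, j mod dim_col B))"

text \<open>Matrix inverse (meaningful for invertible square matrices).\<close>
definition minv :: "complex mat \<Rightarrow> complex mat" where
  "minv A = the (mat_inverse A)"

abbreviation ctr :: "complex mat \<Rightarrow> complex mat" where
  "ctr A \<equiv> mat_adjoint A"

abbreviation colspan :: "nat \<Rightarrow> complex mat \<Rightarrow> complex vec set" where
  "colspan n A \<equiv> vec_space.col_space n A"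

definition hcat :: "nat \<Rightarrow> complex mat list \<Rightarrow> complex mat" where
  "hcat n As = mat_of_cols n (concat (map cols As))"

text \<open>Structured symmetric subsystem transfer functions (state parts g_k and outputs G_k).
  Argument order: C K B N H, and m the number of inputs.\<close>

definition sg1 :: "(complex \<Rightarrow> complex mat) \<Rightarrow> (complex \<Rightarrow> complex mat) \<Rightarrow> complex \<Rightarrow> complex mat" where
  "sg1 K B s1 = minv (K s1) * B s1"

definition sg2 :: "(complex \<Rightarrow> complex mat) \<Rightarrow> (complex \<Rightarrow> complex mat) \<Rightarrow> (complex \<Rightarrow> complex mat)
   \<Rightarrow> (complex \<Rightarrow> complex \<Rightarrow> complex mat) \<Rightarrow> nat \<Rightarrow> complex \<Rightarrow> complex \<Rightarrow> complex mat" where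
  "sg2 K B N H m s1 s2 = (1/2 :: complex) \<cdot>\<^sub>m (minv (K (s1 + s2)) *
     (H s1 s2 * kron (sg1 K B s1) (sg1 K B s2) + H s2 s1 * kron (sg1 K B s2) (sg1 K B s1)
      + N s1 * kron (1\<^sub>m m) (sg1 K B s1) + N s2 * kron (1\<^sub>m m) (sg1 K B s2)))"

definition sg3 :: "(complex \<Rightarrow> complex mat) \<Rightarrow> (complex \<Rightarrow> complex mat) \<Rightarrow> (complex \<Rightarrow> complex mat)
   \<Rightarrow> (complex \<Rightarrow> complex \<Rightarrow> complex mat) \<Rightarrow> nat \<Rightarrow> complex \<Rightarrow> complex \<Rightarrow> complex \<Rightarrow> complex mat" where
  "sg3 K B N H m s1 s2 s3 = (1/6 :: complex) \<cdot>\<^sub>m (minv (K (s1 + s2 + s3)) *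
     (H (s1 + s2) s3 * kron (sg2 K B N H m s1 s2) (sg1 K B s3)
      + H (s1 + s3) s2 * kron (sg2 K B N H m s1 s3) (sg1 K B s2)
      + H (s2 + s3) s1 * kron (sg2 K B N H m s2 s3) (sg1 K B s1)
      + H s1 (s2 + s3) * kron (sg1 K B s1) (sg2 K B N H m s2 s3)
      + H s2 (s1 + s3) * kron (sg1 K B s2) (sg2 K B N H m s1 s3)
      + H s3 (s1 + s2) * kron (sg1 K B s3) (sg2 K B N H m s1 s2)
      + N (s1 + s2) * kron (1\<^sub>m m) (sg2 K B N H m s1 s2)
      + N (s1 + s3) * kron (1\<^sub>m m) (sg2 K B N H m s1 s3)
      + N (s2 + s3) * kron (1\<^sub>m m) (sg2 K B N H m s2 s3)))"

definition TF1 :: "(complex \<Rightarrow> complex mat) \<Rightarrow> (complex \<Rightarrow> complex mat) \<Rightarrow> (complex \<Rightarrow> complex mat)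
   \<Rightarrow> complex \<Rightarrow> complex mat" where
  "TF1 C K B s1 = C s1 * sg1 K B s1"

definition TF2 :: "(complex \<Rightarrow> complex mat) \<Rightarrow> (complex \<Rightarrow> complex mat) \<Rightarrow> (complex \<Rightarrow> complex mat)
   \<Rightarrow> (complex \<Rightarrow> complex mat) \<Rightarrow> (complex \<Rightarrow> complex \<Rightarrow> complex mat) \<Rightarrow> nat
   \<Rightarrow> complex \<Rightarrow> complex \<Rightarrow> complex mat" where
  "TF2 C K B N H m s1 s2 = C (s1 + s2) * sg2 K B N H m s1 s2"

definition TF3 :: "(complex \<Rightarrow> complex mat) \<Rightarrow> (complex \<Rightarrow> complex mat) \<Rightarrow> (complex \<Rightarrow> complex mat)
   \<Rightarrow> (complex \<Rightarrow> complex mat) \<Rightarrow> (complex \<Rightarrow> complex \<Rightarrow> complex mat) \<Rightarrow> nat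
   \<Rightarrow> complex \<Rightarrow> complex \<Rightarrow> complex \<Rightarrow> complex mat" where
  "TF3 C K B N H m s1 s2 s3 = C (s1 + s2 + s3) * sg3 K B N H m s1 s2 s3"

definition redC :: "(complex \<Rightarrow> complex mat) \<Rightarrow> complex mat \<Rightarrow> complex \<Rightarrow> complex mat" where
  "redC C V s = C s * V"
definition redK :: "(complex \<Rightarrow> complex mat) \<Rightarrow> complex mat \<Rightarrow> complex mat \<Rightarrow> complex \<Rightarrow> complex mat" where
  "redK K V W s = ctr W * K s * V"
definition redB :: "(complex \<Rightarrow> complex mat) \<Rightarrow> complex mat \<Rightarrow> complex \<Rightarrow> complex mat" where
  "redB B W s = ctr W * B s"
definition redN :: "(complex \<Rightarrow> complex mat) \<Rightarrow> nat \<Rightarrow> complex mat \<Rightarrow> complex mat \<Rightarrow> complex \<Rightarrow> complex mat" where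
  "redN N m V W s = ctr W * N s * kron (1\<^sub>m m) V"
definition redH :: "(complex \<Rightarrow> complex \<Rightarrow> complex mat) \<Rightarrow> complex mat \<Rightarrow> complex mat
   \<Rightarrow> complex \<Rightarrow> complex \<Rightarrow> complex mat" where
  "redH H V W s1 s2 = ctr W * H s1 s2 * kron V V"

end

theory Submission
  imports Defs
begin



lemma minv_props:
  fixes A :: "complex mat"
  assumes A: "A \<in> carrier_mat k k" and inv: "invertible_mat A"
  shows "A * minv A = 1\<^sub>m k" "minv A * A = 1\<^sub>m k" "minv A \<in> carrier_mat k k"
proof -
  from inv obtain B where AB: "A * B = 1\<^sub>m k" and BA: "B * A = 1\<^sub>m (dim_row B)"
    unfolding invertible_mat_def inverts_mat_def using A by auto
  have "dim_row B = k" using BA A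
    by (metis carrier_matD(2) index_mult_mat(3) index_one_mat(3))
  moreover have "dim_col B = k" using AB
    by (metis index_mult_mat(3) index_one_mat(3))
  ultimately have Bc: "B \<in> carrier_mat k k" by auto
  have "A \<in> Units (ring_mat TYPE(complex) k ())"
    unfolding Units_def using A Bc AB BA \<open>dim_row B = k\<close> by (auto simp: ring_mat_simps)
  hence "mat_inverse A \<noteq> None" using mat_inverse(1)[OF A, where b="()"] by auto
  then obtain M where "mat_inverse A = Some M" by auto
  from mat_inverse(2)[OF A this] this
  show "A * minv A = 1\<^sub>m k" "minv A * A = 1\<^sub>m k" "minv A \<in> carrier_mat k k"
    unfolding minv_def by auto
qed



lemma sum_div_mod:
  fixes f :: "nat \<Rightarrow> nat \<Rightarrow> 'a::comm_monoid_add"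
  shows "(\<Sum>k<a*b. f (k div b) (k mod b)) = (\<Sum>k1<a. \<Sum>k2<b. f k1 k2)"
proof (induction a)
  case 0 then show ?case by simp
next
  case (Suc a)
  have split: "{..<Suc a * b} = {..<a*b} \<union> {a*b..<a*b+b}" by auto
  have "(\<Sum>k<Suc a*b. f (k div b) (k mod b)) = (\<Sum>k<a*b. f (k div b) (k mod b)) + (\<Sum>k\<in>{a*b..<a*b+b}. f (k div b) (k mod b))"
    unfolding split by (subst sum.union_disjoint) auto
  also have "(\<Sum>k\<in>{a*b..<a*b+b}. f (k div b) (k mod b)) = (\<Sum>k2<b. f ((a*b+k2) div b) ((a*b+k2) mod b))"
  proof -
    have "(\<Sum>k\<in>{a*b..<a*b+b}. f (k div b) (k mod b)) = (\<Sum>k2\<in>{0..<b}. f ((k2 + a*b) div b) ((k2+a*b) mod b))"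
      using sum.shift_bounds_nat_ivl[of "\<lambda>k. f (k div b) (k mod b)" 0 "a*b" b] by (simp add: add.commute)
    then show ?thesis by (simp add: atLeast0LessThan add.commute)
  qed
  also have "\<dots> = (\<Sum>k2<b. f a k2)"
    by (rule sum.cong) auto
  finally show ?case using Suc by simp
qed

lemma kron_carrier: "kron A B \<in> carrier_mat (dim_row A * dim_row B) (dim_col A * dim_col B)"
  unfolding kron_def by auto

lemma kron_index:
  assumes "i < dim_row A * dim_row B" "j < dim_col A * dim_col B"
  shows "kron A B $$ (i,j) = A $$ (i div dim_row B, j div dim_col B) * B $$ (i mod dim_row B, j mod dim_col B)"
  using assms unfolding kron_def by auto

lemma kron_mult:
  assumes A: "A \<in> carrier_mat a1 a2" and B: "B \<in> carrier_mat b1 b2"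
    and C: "C \<in> carrier_mat a2 c2" and D: "D \<in> carrier_mat b2 d2"
  shows "kron A B * kron C D = kron (A*C) (B*D)"
proof (rule eq_matI)
  show "dim_row (kron A B * kron C D) = dim_row (kron (A*C) (B*D))"
    using A B C D by (simp add: kron_def)
  show "dim_col (kron A B * kron C D) = dim_col (kron (A*C) (B*D))"
    using A B C D by (simp add: kron_def)
  fix i j assume i: "i < dim_row (kron (A*C) (B*D))" and j: "j < dim_col (kron (A*C) (B*D))"
  have i': "i < a1 * b1" and j': "j < c2 * d2" using i j A B C D by (auto simp: kron_def)
  have b1: "b1 > 0" using i' by (cases b1) auto
  have d2: "d2 > 0" using j' by (cases d2) auto
  have id: "i div b1 < a1" using i' b1 by (simp add: less_mult_imp_div_less)
  have jd: "j div d2 < c2" using j' d2 by (simp add: less_mult_imp_div_less)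
  have im: "i mod b1 < b1" using b1 by simp
  have jm: "j mod d2 < d2" using d2 by simp
  have "(kron A B * kron C D) $$ (i,j) = (\<Sum>k<a2*b2. kron A B $$ (i,k) * kron C D $$ (k,j))"
    using i' j' A B C D by (simp add: kron_def scalar_prod_def atLeast0LessThan)
  also have "\<dots> = (\<Sum>k<a2*b2. (A $$ (i div b1, k div b2) * C $$ (k div b2, j div d2)) * (B $$ (i mod b1, k mod b2) * D $$ (k mod b2, j mod d2)))"
    by (rule sum.cong) (use i' j' A B C D in \<open>auto simp: kron_def\<close>)
  also have "\<dots> = (\<Sum>k1<a2. \<Sum>k2<b2. (A $$ (i div b1, k1) * C $$ (k1, j div d2)) * (B $$ (i mod b1, k2) * D $$ (k2, j mod d2)))"
    by (rule sum_div_mod)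
  also have "\<dots> = (\<Sum>k1<a2. A $$ (i div b1, k1) * C $$ (k1, j div d2)) * (\<Sum>k2<b2. B $$ (i mod b1, k2) * D $$ (k2, j mod d2))"
    by (simp add: sum_product)
  also have "\<dots> = kron (A*C) (B*D) $$ (i,j)"
    using i' j' A B C D id jd im jm by (simp add: kron_def scalar_prod_def atLeast0LessThan)
  finally show "(kron A B * kron C D) $$ (i,j) = kron (A*C) (B*D) $$ (i,j)" .
qed



lemma (in vec_space) colspan_factor0:
  assumes A: "A \<in> carrier_mat n k" and M: "M \<in> carrier_mat n r"
    and sub: "col_space A \<subseteq> col_space M"
  shows "\<exists>Y \<in> carrier_mat r k. A = M * Y"
proof -
  have "\<forall>j<k. \<exists>x\<in>carrier_vec r. M *\<^sub>v x = col A j"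
  proof (intro allI impI)
    fix j assume j: "j < k"
    have "col A j \<in> set (cols A)" using j A by (auto simp: cols_def)
    moreover have "set (cols A) \<subseteq> carrier_vec n" using A by (auto simp: cols_def)
    ultimately have "col A j \<in> col_space A" unfolding col_space_def by (intro span_mem) auto
    with sub have "col A j \<in> col_space M" by auto
    then show "\<exists>x\<in>carrier_vec r. M *\<^sub>v x = col A j"
      using col_space_eq[OF M] M by auto
  qed
  then obtain x where x: "\<And>j. j < k \<Longrightarrow> x j \<in> carrier_vec r \<and> M *\<^sub>v x j = col A j"
    by metis
  define Y where "Y = mat_of_cols r (map x [0..<k])"
  have Y: "Y \<in> carrier_mat r k" unfolding Y_def by auto
  have "A = M * Y"
  proof (rule mat_col_eqI)
    fix j assume "j < dim_col (M * Y)"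
    hence j: "j < k" using Y by simp
    have "col (M * Y) j = M *\<^sub>v col Y j" by (rule col_mult2[OF M Y j])
    also have "col Y j = x j" unfolding Y_def using j x by simp
    finally show "col A j = col (M * Y) j" using x j by simp
  qed (use A M Y in auto)
  with Y show ?thesis by blast
qed

lemma colspan_factor:
  assumes A: "A \<in> carrier_mat n k" and M: "M \<in> carrier_mat n r"
    and sub: "colspan n A \<subseteq> colspan n M"
  shows "\<exists>Y \<in> carrier_mat r k. A = M * Y"
proof -
  interpret vec_space "TYPE(complex)" n .
  show ?thesis using colspan_factor0[OF A M sub] .
qed

lemma ctr_carrier: "A \<in> carrier_mat a b \<Longrightarrow> ctr A \<in> carrier_mat b a"
  unfolding mat_adjoint_def by auto

lemma ctr_index: "A \<in> carrier_mat a b \<Longrightarrow> i < b \<Longrightarrow> j < a \<Longrightarrow> ctr A $$ (i,j) = cnj (A $$ (j,i))"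
  unfolding mat_adjoint_def by (auto simp: mat_of_rows_def)

lemma ctr_ctr: "A \<in> carrier_mat a b \<Longrightarrow> ctr (ctr A) = A"
  by (rule eq_matI) (auto simp: ctr_index[OF ctr_carrier] ctr_index ctr_carrier dest: ctr_carrier)

lemma ctr_mult: assumes A: "A \<in> carrier_mat a b" and B: "B \<in> carrier_mat b c"
  shows "ctr (A * B) = ctr B * ctr A"
proof (rule eq_matI)
  have AB: "A * B \<in> carrier_mat a c" using A B by auto
  fix i j assume "i < dim_row (ctr B * ctr A)" "j < dim_col (ctr B * ctr A)"
  hence i: "i < c" and j: "j < a" using ctr_carrier[OF A] ctr_carrier[OF B] by auto
  show "ctr (A * B) $$ (i,j) = (ctr B * ctr A) $$ (i,j)"
    using i j A B ctr_carrier[OF A] ctr_carrier[OF B]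
    by (simp add: ctr_index[OF AB] ctr_index[OF A] ctr_index[OF B] scalar_prod_def mult.commute)
qed (use ctr_carrier[OF A] ctr_carrier[OF B] ctr_carrier[OF mult_carrier_mat[OF A B]] in auto)


lemma smult_smult_mat: "a \<cdot>\<^sub>m (b \<cdot>\<^sub>m A) = (a * b) \<cdot>\<^sub>m (A :: complex mat)"
  by (rule eq_matI) simp_all
lemma smult_one_mat': "(1::complex) \<cdot>\<^sub>m A = A"
  by (rule eq_matI) simp_all


lemma hcat_sub:
  fixes As :: "complex mat list"
  assumes all: "\<And>A. A \<in> set As \<Longrightarrow> dim_row A = n" and A: "A \<in> set As"
  shows "colspan n A \<subseteq> colspan n (hcat n As)"
proof -
  interpret vec_space "TYPE(complex)" n .
  have sub: "set (concat (map cols As)) \<subseteq> carrier_vec n"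
  proof
    fix v assume "v \<in> set (concat (map cols As))"
    then obtain B where B: "B \<in> set As" and v: "v \<in> set (cols B)" by auto
    show "v \<in> carrier_vec n" using cols_dim[of B] all[OF B] v by auto
  qed
  have "cols (hcat n As) = concat (map cols As)"
    unfolding hcat_def using sub by simp
  hence "set (cols A) \<subseteq> set (cols (hcat n As))" using A by auto
  thus ?thesis unfolding col_space_def by (rule span_is_monotone)
qed

lemma sg2_diag:
  assumes Kc: "minv (K (s+s)) \<in> carrier_mat k k" and Hc: "H s s \<in> carrier_mat k (k*k)"
    and Nc: "N s \<in> carrier_mat k (k*m)" and gc: "sg1 K B s \<in> carrier_mat k m"
  shows "sg2 K B N H m s s = minv (K (s+s)) * (H s s * kron (sg1 K B s) (sg1 K B s) + N s * kron (1\<^sub>m m) (sg1 K B s))"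
proof -
  define g where "g = sg1 K B s"
  define X where "X = H s s * kron g g"
  define Y where "Y = N s * kron (1\<^sub>m m) g"
  have X: "X \<in> carrier_mat k (m*m)" unfolding X_def using Hc gc g_def
    by (intro mult_carrier_mat[OF Hc]) (auto simp: kron_def)
  have Y: "Y \<in> carrier_mat k (m*m)" unfolding Y_def using Nc gc g_def
    by (intro mult_carrier_mat[OF Nc]) (auto simp: kron_def mult.commute)
  have sum: "X + X + Y + Y = (2::complex) \<cdot>\<^sub>m (X + Y)"
  proof (rule eq_matI)
    fix i j assume "i < dim_row (2 \<cdot>\<^sub>m (X + Y))" "j < dim_col (2 \<cdot>\<^sub>m (X + Y))"
    hence i: "i < k" and j: "j < m*m" using Y by auto
    have e: "\<And>x y :: complex. x+x+y+y = 2*(x+y)" by simp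
    show "(X + X + Y + Y) $$ (i, j) = (2 \<cdot>\<^sub>m (X + Y)) $$ (i, j)"
      using i j X Y by (simp only: index_add_mat index_smult_mat carrier_matD e)
  qed (use X Y in simp_all)
  have "sg2 K B N H m s s = (1/2::complex) \<cdot>\<^sub>m (minv (K (s+s)) * (X + X + Y + Y))"
    by (simp only: sg2_def X_def Y_def g_def)
  also have "\<dots> = (1/2::complex) \<cdot>\<^sub>m (minv (K (s+s)) * ((2::complex) \<cdot>\<^sub>m (X + Y)))"
    by (simp only: sum)
  also have "\<dots> = (1/2::complex) \<cdot>\<^sub>m ((2::complex) \<cdot>\<^sub>m (minv (K (s+s)) * (X + Y)))"
    using mult_smult_distrib[OF Kc, of "X+Y" "m*m" 2] X Y by simp
  also have "\<dots> = minv (K (s+s)) * (X + Y)"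
    unfolding smult_smult_mat by (simp add: smult_one_mat')
  finally show ?thesis unfolding X_def Y_def g_def .
qed

lemma sg3_diag:
  assumes Kc: "minv (K (s+s+s)) \<in> carrier_mat k k"
    and Hc1: "H (s+s) s \<in> carrier_mat k (k*k)" and Hc2: "H s (s+s) \<in> carrier_mat k (k*k)"
    and Nc: "N (s+s) \<in> carrier_mat k (k*m)" and gc: "sg1 K B s \<in> carrier_mat k m"
    and g2c: "sg2 K B N H m s s \<in> carrier_mat k (m*m)"
  shows "sg3 K B N H m s s s = (1/2::complex) \<cdot>\<^sub>m (minv (K (s+s+s)) *
     (H (s+s) s * kron (sg2 K B N H m s s) (sg1 K B s) + H s (s+s) * kron (sg1 K B s) (sg2 K B N H m s s)
      + N (s+s) * kron (1\<^sub>m m) (sg2 K B N H m s s)))"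
proof -
  define g where "g = sg1 K B s"
  define g2 where "g2 = sg2 K B N H m s s"
  define X where "X = H (s+s) s * kron g2 g"
  define Y where "Y = H s (s+s) * kron g g2"
  define Z where "Z = N (s+s) * kron (1\<^sub>m m) g2"
  have g2': "g2 \<in> carrier_mat k (m*m)" using g2c g2_def by simp
  have g': "g \<in> carrier_mat k m" using gc g_def by simp
  have kc1: "kron g2 g \<in> carrier_mat (k*k) (m*m*m)"
    using kron_carrier[of g2 g] carrier_matD[OF g2'] carrier_matD[OF g'] by simp
  have kc2: "kron g g2 \<in> carrier_mat (k*k) (m*m*m)"
    using kron_carrier[of g g2] carrier_matD[OF g2'] carrier_matD[OF g'] by (simp add: mult.assoc)
  have kc3: "kron (1\<^sub>m m) g2 \<in> carrier_mat (k*m) (m*m*m)"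
    using kron_carrier[of "1\<^sub>m m" g2] carrier_matD[OF g2'] by (simp add: mult.commute[of m k] mult.assoc)
  have X: "X \<in> carrier_mat k (m*m*m)" unfolding X_def by (rule mult_carrier_mat[OF Hc1 kc1])
  have Y: "Y \<in> carrier_mat k (m*m*m)" unfolding Y_def by (rule mult_carrier_mat[OF Hc2 kc2])
  have Z: "Z \<in> carrier_mat k (m*m*m)" unfolding Z_def by (rule mult_carrier_mat[OF Nc kc3])
  have sum: "X + X + X + Y + Y + Y + Z + Z + Z = (3::complex) \<cdot>\<^sub>m (X + Y + Z)"
  proof (rule eq_matI)
    fix i j assume "i < dim_row (3 \<cdot>\<^sub>m (X + Y + Z))" "j < dim_col (3 \<cdot>\<^sub>m (X + Y + Z))"
    hence i: "i < k" and j: "j < m*m*m" using Z by auto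
    have e: "\<And>x y z :: complex. x+x+x+y+y+y+z+z+z = 3*(x+y+z)" by simp
    show "(X + X + X + Y + Y + Y + Z + Z + Z) $$ (i, j) = (3 \<cdot>\<^sub>m (X + Y + Z)) $$ (i, j)"
      using i j X Y Z by (simp only: index_add_mat index_smult_mat carrier_matD e)
  qed (use X Y Z in simp_all)
  have XYZ: "X + Y + Z \<in> carrier_mat k (m*m*m)" using X Y Z by simp
  have "sg3 K B N H m s s s = (1/6::complex) \<cdot>\<^sub>m (minv (K (s+s+s)) * (X + X + X + Y + Y + Y + Z + Z + Z))"
    by (simp only: sg3_def X_def Y_def Z_def g_def g2_def)
  also have "\<dots> = (1/6::complex) \<cdot>\<^sub>m (minv (K (s+s+s)) * ((3::complex) \<cdot>\<^sub>m (X + Y + Z)))"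
    by (simp only: sum)
  also have "\<dots> = (1/6::complex) \<cdot>\<^sub>m ((3::complex) \<cdot>\<^sub>m (minv (K (s+s+s)) * (X + Y + Z)))"
    using mult_smult_distrib[OF Kc XYZ, of 3] by (simp only:)
  also have "\<dots> = (1/2::complex) \<cdot>\<^sub>m (minv (K (s+s+s)) * (X + Y + Z))"
    unfolding smult_smult_mat by simp
  finally show ?thesis unfolding X_def Y_def Z_def g_def g2_def .
qed




lemma assoc_dim: assumes "dim_col A = dim_row B" "dim_col B = dim_row C" shows "A * B * C = A * (B * C)"
proof -
  have a: "A \<in> carrier_mat (dim_row A) (dim_col A)" by (rule carrier_matI) (rule refl)+
  have b: "B \<in> carrier_mat (dim_col A) (dim_col B)" by (rule carrier_matI) (use assms in simp_all)
  have c: "C \<in> carrier_mat (dim_col B) (dim_col C)" by (rule carrier_matI) (use assms in simp_all)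
  show ?thesis by (rule assoc_mult_mat[OF a b c])
qed
lemma oneside:
  assumes K: "K \<in> carrier_mat n n" and V: "V \<in> carrier_mat n r" and W: "W \<in> carrier_mat n r"
    and Kr: "invertible_mat (ctr W * K * V)" and Y: "Y \<in> carrier_mat r q"
  shows "minv (ctr W * K * V) * (ctr W * (K * (V * Y))) = Y"
proof -
  have Wc: "ctr W \<in> carrier_mat r n" using ctr_carrier[OF W] .
  have KrC: "ctr W * K * V \<in> carrier_mat r r" using Wc K V by auto
  note mi = minv_props[OF KrC Kr]
  have "ctr W * (K * (V * Y)) = (ctr W * K * V) * Y"
    using Wc K V Y by (simp add: assoc_dim carrier_matD[OF Wc] carrier_matD[OF K] carrier_matD[OF V] carrier_matD[OF Y])
  hence "minv (ctr W * K * V) * (ctr W * (K * (V * Y))) = (minv (ctr W * K * V) * (ctr W * K * V)) * Y"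
    using mi(3) KrC Y by (simp add: assoc_dim carrier_matD[OF mi(3)] carrier_matD[OF KrC] carrier_matD[OF Y])
  also have "\<dots> = Y" using mi(2) Y by simp
  finally show ?thesis .
qed

lemma twoside:
  assumes C: "C \<in> carrier_mat p n" and K: "K \<in> carrier_mat n n" and Ki: "invertible_mat K"
    and V: "V \<in> carrier_mat n r" and W: "W \<in> carrier_mat n r"
    and Kr: "invertible_mat (ctr W * K * V)" and Z: "Z \<in> carrier_mat r p"
    and CZ: "C * minv K = ctr Z * ctr W" and R: "R \<in> carrier_mat n q"
  shows "(C * V) * (minv (ctr W * K * V) * (ctr W * R)) = C * (minv K * R)"
proof -
  have Wc: "ctr W \<in> carrier_mat r n" using ctr_carrier[OF W] .
  have Zc: "ctr Z \<in> carrier_mat p r" using ctr_carrier[OF Z] .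
  have KrC: "ctr W * K * V \<in> carrier_mat r r" using Wc K V by auto
  note mi = minv_props[OF KrC Kr]
  note mk = minv_props[OF K Ki]
  note dims = carrier_matD[OF Wc] carrier_matD[OF Zc] carrier_matD[OF K] carrier_matD[OF V]
    carrier_matD[OF C] carrier_matD[OF R] carrier_matD[OF mk(3)] carrier_matD[OF mi(3)]
  have C': "C = ctr Z * ctr W * K"
  proof -
    have "C = C * (minv K * K)" using mk C by simp
    also have "\<dots> = (C * minv K) * K" by (simp add: assoc_dim dims)
    finally show ?thesis unfolding CZ .
  qed
  define M where "M = minv (ctr W * K * V)"
  have Mc: "M \<in> carrier_mat r r" using mi M_def by simp
  have "(C * V) * (M * (ctr W * R)) = ctr Z * ((ctr W * K * V) * M) * (ctr W * R)"
    unfolding C' by (simp add: assoc_dim dims carrier_matD[OF Mc])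
  also have "\<dots> = ctr Z * (ctr W * R)" using mi Zc M_def by simp
  also have "\<dots> = (C * minv K) * R" unfolding CZ by (simp add: assoc_dim dims)
  also have "\<dots> = C * (minv K * R)" by (simp add: assoc_dim dims)
  finally show ?thesis unfolding M_def .
qed

lemma wspan:
  assumes C: "C \<in> carrier_mat p n" and K: "K \<in> carrier_mat n n" and Ki: "invertible_mat K"
    and W: "W \<in> carrier_mat n r"
    and sub: "colspan n (ctr (minv K) * ctr C) \<subseteq> colspan n W"
  shows "\<exists>Z \<in> carrier_mat r p. C * minv K = ctr Z * ctr W"
proof -
  note mk = minv_props[OF K Ki]
  have W0: "ctr (minv K) * ctr C \<in> carrier_mat n p" using ctr_carrier[OF mk(3)] ctr_carrier[OF C] by (rule mult_carrier_mat)
  obtain Z where Z: "Z \<in> carrier_mat r p" and e: "ctr (minv K) * ctr C = W * Z"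
    using colspan_factor[OF W0 W sub] by blast
  have "C * minv K = ctr (ctr (minv K) * ctr C)"
    using ctr_mult[OF ctr_carrier[OF mk(3)] ctr_carrier[OF C]] ctr_ctr[OF C] ctr_ctr[OF mk(3)] by simp
  also have "\<dots> = ctr Z * ctr W" unfolding e using ctr_mult[OF W Z] .
  finally show ?thesis using Z by blast
qed


lemma redkron:
  assumes Wt: "Wt \<in> carrier_mat r n" and H: "H \<in> carrier_mat n (a*b)"
    and A: "A \<in> carrier_mat a a'" and Bm: "Bm \<in> carrier_mat b b'"
    and Y: "Y \<in> carrier_mat a' c" and Z: "Z \<in> carrier_mat b' d"
  shows "(Wt * H * kron A Bm) * kron Y Z = Wt * (H * kron (A*Y) (Bm*Z))"
proof -
  have k1: "kron A Bm \<in> carrier_mat (a*b) (a'*b')" using kron_carrier[of A Bm] A Bm by auto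
  have k2: "kron Y Z \<in> carrier_mat (a'*b') (c*d)" using kron_carrier[of Y Z] Y Z by auto
  have WH: "Wt * H \<in> carrier_mat r (a*b)" using Wt H by simp
  have "(Wt * H * kron A Bm) * kron Y Z = (Wt * H) * (kron A Bm * kron Y Z)"
    by (rule assoc_mult_mat[OF WH k1 k2])
  also have "kron A Bm * kron Y Z = kron (A*Y) (Bm*Z)" by (rule kron_mult[OF A Bm Y Z])
  also have "(Wt * H) * kron (A*Y) (Bm*Z) = Wt * (H * kron (A*Y) (Bm*Z))"
    by (rule assoc_mult_mat[OF Wt H]) (use kron_carrier[of "A*Y" "Bm*Z"] A Bm Y Z in auto)
  finally show ?thesis .
qed



theorem theorem4p3:
  fixes n m p r :: nat
    and C K B N :: "complex \<Rightarrow> complex mat"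
    and H :: "complex \<Rightarrow> complex \<Rightarrow> complex mat"
    and V W V1 V2 V3 W1 W2 :: "complex mat"
    and \<sigma> :: complex
  assumes C_dim: "\<And>s. s \<in> {\<sigma>, 2*\<sigma>, 3*\<sigma>} \<Longrightarrow> C s \<in> carrier_mat p n"
    and K_dim: "\<And>s. s \<in> {\<sigma>, 2*\<sigma>, 3*\<sigma>} \<Longrightarrow> K s \<in> carrier_mat n n"
    and B_dim: "\<And>s. s \<in> {\<sigma>, 2*\<sigma>, 3*\<sigma>} \<Longrightarrow> B s \<in> carrier_mat n m"
    and N_dim: "\<And>s. s \<in> {\<sigma>, 2*\<sigma>, 3*\<sigma>} \<Longrightarrow> N s \<in> carrier_mat n (n * m)"
    and H_dim: "\<And>s1 s2. (s1, s2) \<in> {(\<sigma>, \<sigma>), (2*\<sigma>, \<sigma>), (\<sigma>, 2*\<sigma>)} \<Longrightarrow> H s1 s2 \<in> carrier_mat n (n * n)"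
    and K_inv: "\<And>s. s \<in> {\<sigma>, 2*\<sigma>, 3*\<sigma>} \<Longrightarrow> invertible_mat (K s)"
    and V_dim: "V \<in> carrier_mat n r" and W_dim: "W \<in> carrier_mat n r"
    and V_rank: "vec_space.rank n V = r"
    and W_rank: "vec_space.rank n W = r"
    and Kr_inv: "\<And>s. s \<in> {\<sigma>, 2*\<sigma>, 3*\<sigma>} \<Longrightarrow> invertible_mat (ctr W * K s * V)"
    and V1_def: "V1 = minv (K \<sigma>) * B \<sigma>"
    and V2_def: "V2 = minv (K (2*\<sigma>)) * (H \<sigma> \<sigma> * kron V1 V1 + N \<sigma> * kron (1\<^sub>m m) V1)"
    and V3_def: "V3 = minv (K (3*\<sigma>)) * (H (2*\<sigma>) \<sigma> * kron V2 V1 + H \<sigma> (2*\<sigma>) * kron V1 V2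
                      + N (2*\<sigma>) * kron (1\<^sub>m m) V2)"
    and W1_def: "W1 = ctr (minv (K (2*\<sigma>))) * ctr (C (2*\<sigma>))"
    and W2_def: "W2 = ctr (minv (K (3*\<sigma>))) * ctr (C (3*\<sigma>))"
  shows
   "(colspan n (hcat n [V1, V2, V3]) \<subseteq> colspan n V \<longrightarrow>
      TF1 C K B \<sigma> = TF1 (redC C V) (redK K V W) (redB B W) \<sigma>
    \<and> TF2 C K B N H m \<sigma> \<sigma> = TF2 (redC C V) (redK K V W) (redB B W) (redN N m V W) (redH H V W) m \<sigma> \<sigma>
    \<and> TF3 C K B N H m \<sigma> \<sigma> \<sigma> = TF3 (redC C V) (redK K V W) (redB B W) (redN N m V W) (redH H V W) m \<sigma> \<sigma> \<sigma>)
  \<and> (colspan n V1 \<subseteq> colspan n V \<and> colspan n W1 \<subseteq> colspan n W \<longrightarrow>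
      TF1 C K B \<sigma> = TF1 (redC C V) (redK K V W) (redB B W) \<sigma>
    \<and> TF1 C K B (2*\<sigma>) = TF1 (redC C V) (redK K V W) (redB B W) (2*\<sigma>)
    \<and> TF2 C K B N H m \<sigma> \<sigma> = TF2 (redC C V) (redK K V W) (redB B W) (redN N m V W) (redH H V W) m \<sigma> \<sigma>)
  \<and> (colspan n (hcat n [V1, V2]) \<subseteq> colspan n V \<and> colspan n W2 \<subseteq> colspan n W \<longrightarrow>
      TF1 C K B \<sigma> = TF1 (redC C V) (redK K V W) (redB B W) \<sigma>
    \<and> TF1 C K B (3*\<sigma>) = TF1 (redC C V) (redK K V W) (redB B W) (3*\<sigma>)
    \<and> TF2 C K B N H m \<sigma> \<sigma> = TF2 (redC C V) (redK K V W) (redB B W) (redN N m V W) (redH H V W) m \<sigma> \<sigma>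
    \<and> TF3 C K B N H m \<sigma> \<sigma> \<sigma> = TF3 (redC C V) (redK K V W) (redB B W) (redN N m V W) (redH H V W) m \<sigma> \<sigma> \<sigma>)"
  proof -
  have e2: "\<sigma> + \<sigma> = 2*\<sigma>" by (rule mult_2[symmetric])
  have e3: "\<sigma> + \<sigma> + \<sigma> = 3*\<sigma>"
  proof -
    have "(3::complex) * \<sigma> = (2 + 1) * \<sigma>" by simp
    also have "\<dots> = \<sigma> + \<sigma> + \<sigma>" by (simp only: distrib_right mult_2 mult_1)
    finally show ?thesis by (rule sym)
  qed
  have S1: "\<sigma> \<in> {\<sigma>, 2*\<sigma>, 3*\<sigma>}" and S2: "2*\<sigma> \<in> {\<sigma>, 2*\<sigma>, 3*\<sigma>}" and S3: "3*\<sigma> \<in> {\<sigma>, 2*\<sigma>, 3*\<sigma>}" by auto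
  note K1 = K_dim[OF S1] and K2 = K_dim[OF S2] and K3 = K_dim[OF S3]
  note Ki1 = K_inv[OF S1] and Ki2 = K_inv[OF S2] and Ki3 = K_inv[OF S3]
  note mk1 = minv_props[OF K1 Ki1] and mk2 = minv_props[OF K2 Ki2] and mk3 = minv_props[OF K3 Ki3]
  note B1 = B_dim[OF S1] and B2 = B_dim[OF S2] and B3 = B_dim[OF S3]
  note C1 = C_dim[OF S1] and C2 = C_dim[OF S2] and C3 = C_dim[OF S3]
  have N1: "N \<sigma> \<in> carrier_mat n (m*n)" using N_dim[OF S1] by (simp add: mult.commute)
  have N2: "N (2*\<sigma>) \<in> carrier_mat n (m*n)" using N_dim[OF S2] by (simp add: mult.commute)
  have H11: "H \<sigma> \<sigma> \<in> carrier_mat n (n*n)" using H_dim by auto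
  have H21: "H (2*\<sigma>) \<sigma> \<in> carrier_mat n (n*n)" using H_dim by auto
  have H12: "H \<sigma> (2*\<sigma>) \<in> carrier_mat n (n*n)" using H_dim by auto
  have Wc: "ctr W \<in> carrier_mat r n" using ctr_carrier[OF W_dim] .
  have Kr1c: "ctr W * K \<sigma> * V \<in> carrier_mat r r" using Wc K1 V_dim by auto
  have Kr2c: "ctr W * K (2*\<sigma>) * V \<in> carrier_mat r r" using Wc K2 V_dim by auto
  have Kr3c: "ctr W * K (3*\<sigma>) * V \<in> carrier_mat r r" using Wc K3 V_dim by auto
  note Kri1 = Kr_inv[OF S1] and Kri2 = Kr_inv[OF S2] and Kri3 = Kr_inv[OF S3]
  note mr1 = minv_props[OF Kr1c Kri1] and mr2 = minv_props[OF Kr2c Kri2] and mr3 = minv_props[OF Kr3c Kri3]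
  have I1: "1\<^sub>m m \<in> carrier_mat m m" by simp
  have V1c: "V1 \<in> carrier_mat n m" unfolding V1_def using mk1(3) B1 by simp
  define R2 where "R2 = H \<sigma> \<sigma> * kron V1 V1 + N \<sigma> * kron (1\<^sub>m m) V1"
  have kV1V1: "kron V1 V1 \<in> carrier_mat (n*n) (m*m)" using kron_carrier[of V1 V1] V1c by auto
  have kIV1: "kron (1\<^sub>m m) V1 \<in> carrier_mat (m*n) (m*m)" using kron_carrier[of "1\<^sub>m m" V1] V1c by auto
  have R2c: "R2 \<in> carrier_mat n (m*m)" unfolding R2_def using H11 N1 kV1V1 kIV1 by auto
  have V2': "V2 = minv (K (2*\<sigma>)) * R2" unfolding V2_def R2_def ..
  have V2c: "V2 \<in> carrier_mat n (m*m)" unfolding V2' using mk2(3) R2c by simp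
  define R3 where "R3 = H (2*\<sigma>) \<sigma> * kron V2 V1 + H \<sigma> (2*\<sigma>) * kron V1 V2 + N (2*\<sigma>) * kron (1\<^sub>m m) V2"
  have kV2V1: "kron V2 V1 \<in> carrier_mat (n*n) (m*m*m)" using kron_carrier[of V2 V1] V1c V2c by auto
  have kV1V2: "kron V1 V2 \<in> carrier_mat (n*n) (m*m*m)" using kron_carrier[of V1 V2] V1c V2c by (auto simp: mult.assoc)
  have kIV2: "kron (1\<^sub>m m) V2 \<in> carrier_mat (m*n) (m*m*m)" using kron_carrier[of "1\<^sub>m m" V2] V2c by (auto simp: mult.assoc)
  have R3c: "R3 \<in> carrier_mat n (m*m*m)" unfolding R3_def using H21 H12 N2 kV2V1 kV1V2 kIV2 by auto
  have V3': "V3 = minv (K (3*\<sigma>)) * R3" unfolding V3_def R3_def ..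
  have V3c: "V3 \<in> carrier_mat n (m*m*m)" unfolding V3' using mk3(3) R3c by simp
  have g1: "sg1 K B \<sigma> = V1" unfolding sg1_def V1_def ..
  have g2: "sg2 K B N H m \<sigma> \<sigma> = V2"
  proof -
    have "sg2 K B N H m \<sigma> \<sigma> = minv (K (\<sigma>+\<sigma>)) * (H \<sigma> \<sigma> * kron (sg1 K B \<sigma>) (sg1 K B \<sigma>) + N \<sigma> * kron (1\<^sub>m m) (sg1 K B \<sigma>))"
      by (rule sg2_diag[where k=n]) (use mk2(3) H11 N_dim[OF S1] V1c in \<open>simp_all add: e2 g1\<close>)
    thus ?thesis unfolding e2 g1 V2_def .
  qed
  have g3: "sg3 K B N H m \<sigma> \<sigma> \<sigma> = (1/2::complex) \<cdot>\<^sub>m V3"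
  proof -
    have "sg3 K B N H m \<sigma> \<sigma> \<sigma> = (1/2::complex) \<cdot>\<^sub>m (minv (K (\<sigma>+\<sigma>+\<sigma>)) *
     (H (\<sigma>+\<sigma>) \<sigma> * kron (sg2 K B N H m \<sigma> \<sigma>) (sg1 K B \<sigma>) + H \<sigma> (\<sigma>+\<sigma>) * kron (sg1 K B \<sigma>) (sg2 K B N H m \<sigma> \<sigma>)
      + N (\<sigma>+\<sigma>) * kron (1\<^sub>m m) (sg2 K B N H m \<sigma> \<sigma>)))"
      by (rule sg3_diag[where k=n]) (use mk3(3) H21 H12 N_dim[OF S2] V1c V2c in \<open>simp_all add: e2 e3 g1 g2\<close>)
    thus ?thesis unfolding e3 unfolding e2 g1 g2 V3_def .
  qed
  have T1: "TF1 C K B \<sigma> = C \<sigma> * V1" unfolding TF1_def g1 ..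
  have T1b: "TF1 C K B (2*\<sigma>) = C (2*\<sigma>) * (minv (K (2*\<sigma>)) * B (2*\<sigma>))" unfolding TF1_def sg1_def ..
  have T1c: "TF1 C K B (3*\<sigma>) = C (3*\<sigma>) * (minv (K (3*\<sigma>)) * B (3*\<sigma>))" unfolding TF1_def sg1_def ..
  have T2: "TF2 C K B N H m \<sigma> \<sigma> = C (2*\<sigma>) * V2" unfolding TF2_def g2 e2 ..
  have T3: "TF3 C K B N H m \<sigma> \<sigma> \<sigma> = C (3*\<sigma>) * ((1/2::complex) \<cdot>\<^sub>m V3)" unfolding TF3_def g3 e3 ..
  have rK: "\<And>s. redK K V W s = ctr W * K s * V" unfolding redK_def ..
  have rB: "\<And>s. redB B W s = ctr W * B s" unfolding redB_def ..
  have rC: "\<And>s. redC C V s = C s * V" unfolding redC_def ..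
  have rg1e: "sg1 (redK K V W) (redB B W) \<sigma> = minv (ctr W * K \<sigma> * V) * (ctr W * B \<sigma>)"
    unfolding sg1_def rK rB ..
  have rT1: "\<And>s. TF1 (redC C V) (redK K V W) (redB B W) s = (C s * V) * (minv (ctr W * K s * V) * (ctr W * B s))"
    unfolding TF1_def sg1_def rK rB rC ..
  have P1: "\<exists>Y1 \<in> carrier_mat r m. V1 = V * Y1 \<and> sg1 (redK K V W) (redB B W) \<sigma> = Y1
     \<and> TF1 C K B \<sigma> = TF1 (redC C V) (redK K V W) (redB B W) \<sigma>"
    if sub1: "colspan n V1 \<subseteq> colspan n V"
  proof -
    obtain Y1 where Y1: "Y1 \<in> carrier_mat r m" and eY1: "V1 = V * Y1"
      using colspan_factor[OF V1c V_dim sub1] by blast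
    have "B \<sigma> = K \<sigma> * V1"
    proof -
      have "K \<sigma> * V1 = (K \<sigma> * minv (K \<sigma>)) * B \<sigma>" unfolding V1_def
        using K1 mk1(3) B1 by (simp add: assoc_mult_mat)
      thus ?thesis using mk1(1) B1 by simp
    qed
    hence rg: "sg1 (redK K V W) (redB B W) \<sigma> = Y1"
      unfolding rg1e eY1 using oneside[OF K1 V_dim W_dim Kri1 Y1] by simp
    have "TF1 (redC C V) (redK K V W) (redB B W) \<sigma> = C \<sigma> * V1"
      unfolding TF1_def rg rC eY1 using C1 V_dim Y1 by (simp add: assoc_mult_mat)
    thus ?thesis using Y1 eY1 rg T1 by auto
  qed
  have rH: "\<And>s1 s2. redH H V W s1 s2 = ctr W * H s1 s2 * kron V V" unfolding redH_def ..
  have rN: "\<And>s. redN N m V W s = ctr W * N s * kron (1\<^sub>m m) V" unfolding redN_def ..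
  have kVV: "kron V V \<in> carrier_mat (n*n) (r*r)" using kron_carrier[of V V] V_dim by auto
  have kIV: "kron (1\<^sub>m m) V \<in> carrier_mat (m*n) (r*m)" using kron_carrier[of "1\<^sub>m m" V] V_dim by (auto simp: mult.commute)
  have rH11: "redH H V W \<sigma> \<sigma> \<in> carrier_mat r (r*r)" unfolding rH using Wc H11 kVV by auto
  have rH21: "redH H V W (\<sigma>+\<sigma>) \<sigma> \<in> carrier_mat r (r*r)" unfolding rH e2 using Wc H21 kVV by auto
  have rH12: "redH H V W \<sigma> (\<sigma>+\<sigma>) \<in> carrier_mat r (r*r)" unfolding rH e2 using Wc H12 kVV by auto
  have rN1: "redN N m V W \<sigma> \<in> carrier_mat r (r*m)" unfolding rN using Wc N1 kIV by auto
  have rN2: "redN N m V W (\<sigma>+\<sigma>) \<in> carrier_mat r (r*m)" unfolding rN e2 using Wc N2 kIV by auto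
  have II: "1\<^sub>m m * 1\<^sub>m m = (1\<^sub>m m :: complex mat)" by simp
  have P2: "sg2 (redK K V W) (redB B W) (redN N m V W) (redH H V W) m \<sigma> \<sigma> = minv (ctr W * K (2*\<sigma>) * V) * (ctr W * R2)"
    if Y1: "Y1 \<in> carrier_mat r m" and eY1: "V1 = V * Y1" and rg: "sg1 (redK K V W) (redB B W) \<sigma> = Y1" for Y1
  proof -
    have "sg2 (redK K V W) (redB B W) (redN N m V W) (redH H V W) m \<sigma> \<sigma> =
      minv (redK K V W (\<sigma>+\<sigma>)) * (redH H V W \<sigma> \<sigma> * kron Y1 Y1
        + redN N m V W \<sigma> * kron (1\<^sub>m m) Y1)"
      unfolding rg[symmetric]
      by (rule sg2_diag[where k=r]) (use mr2(3) rH11 rN1 Y1 in \<open>simp_all add: rK e2 rg\<close>)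
    also have "redH H V W \<sigma> \<sigma> * kron Y1 Y1 = ctr W * (H \<sigma> \<sigma> * kron V1 V1)"
      unfolding rH eY1 by (rule redkron[OF Wc H11 V_dim V_dim Y1 Y1])
    also have "redN N m V W \<sigma> * kron (1\<^sub>m m) Y1 = ctr W * (N \<sigma> * kron (1\<^sub>m m) V1)"
      unfolding rN eY1 using redkron[OF Wc N1 I1 V_dim I1 Y1] by (simp only: II)
    also have "ctr W * (H \<sigma> \<sigma> * kron V1 V1) + ctr W * (N \<sigma> * kron (1\<^sub>m m) V1) = ctr W * R2"
    proof -
      have a: "H \<sigma> \<sigma> * kron V1 V1 \<in> carrier_mat n (m*m)" using H11 kV1V1 by simp
      have b: "N \<sigma> * kron (1\<^sub>m m) V1 \<in> carrier_mat n (m*m)" using N1 kIV1 by simp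
      show ?thesis unfolding R2_def using mult_add_distrib_mat[OF Wc a b] by simp
    qed
    finally show ?thesis unfolding rK rg e2 .
  qed
  have P2a: "sg2 (redK K V W) (redB B W) (redN N m V W) (redH H V W) m \<sigma> \<sigma> = Y2"
    if Y1: "Y1 \<in> carrier_mat r m" and eY1: "V1 = V * Y1" and rg: "sg1 (redK K V W) (redB B W) \<sigma> = Y1"
      and Y2: "Y2 \<in> carrier_mat r (m*m)" and eY2: "V2 = V * Y2" for Y1 Y2
  proof -
    have "R2 = K (2*\<sigma>) * V2"
    proof -
      have "K (2*\<sigma>) * V2 = (K (2*\<sigma>) * minv (K (2*\<sigma>))) * R2" unfolding V2'
        using K2 mk2(3) R2c by (simp add: assoc_mult_mat)
      thus ?thesis using mk2(1) R2c by simp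
    qed
    thus ?thesis unfolding P2[OF Y1 eY1 rg] eY2 using oneside[OF K2 V_dim W_dim Kri2 Y2] by simp
  qed
  have P3: "sg3 (redK K V W) (redB B W) (redN N m V W) (redH H V W) m \<sigma> \<sigma> \<sigma> = (1/2::complex) \<cdot>\<^sub>m (minv (ctr W * K (3*\<sigma>) * V) * (ctr W * R3))"
    if Y1: "Y1 \<in> carrier_mat r m" and eY1: "V1 = V * Y1" and rg: "sg1 (redK K V W) (redB B W) \<sigma> = Y1"
      and Y2: "Y2 \<in> carrier_mat r (m*m)" and eY2: "V2 = V * Y2"
      and rg2: "sg2 (redK K V W) (redB B W) (redN N m V W) (redH H V W) m \<sigma> \<sigma> = Y2" for Y1 Y2
  proof -
    have "sg3 (redK K V W) (redB B W) (redN N m V W) (redH H V W) m \<sigma> \<sigma> \<sigma> = (1/2::complex) \<cdot>\<^sub>m (minv (redK K V W (\<sigma>+\<sigma>+\<sigma>)) *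
     (redH H V W (\<sigma>+\<sigma>) \<sigma> * kron Y2 Y1
      + redH H V W \<sigma> (\<sigma>+\<sigma>) * kron Y1 Y2
      + redN N m V W (\<sigma>+\<sigma>) * kron (1\<^sub>m m) Y2))"
      unfolding rg[symmetric] rg2[symmetric]
      by (rule sg3_diag[where k=r]) (use mr3(3) rH21 rH12 rN2 Y1 Y2 in \<open>simp_all add: rK e3 rg rg2\<close>)
    also have "redH H V W (\<sigma>+\<sigma>) \<sigma> * kron Y2 Y1 = ctr W * (H (2*\<sigma>) \<sigma> * kron V2 V1)"
      unfolding rH eY1 eY2 e2 by (rule redkron[OF Wc H21 V_dim V_dim Y2 Y1])
    also have "redH H V W \<sigma> (\<sigma>+\<sigma>) * kron Y1 Y2 = ctr W * (H \<sigma> (2*\<sigma>) * kron V1 V2)"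
      unfolding rH eY1 eY2 e2 by (rule redkron[OF Wc H12 V_dim V_dim Y1 Y2])
    also have "redN N m V W (\<sigma>+\<sigma>) * kron (1\<^sub>m m) Y2 = ctr W * (N (2*\<sigma>) * kron (1\<^sub>m m) V2)"
      unfolding rN eY2 e2 using redkron[OF Wc N2 I1 V_dim I1 Y2] by (simp only: II)
    also have "ctr W * (H (2*\<sigma>) \<sigma> * kron V2 V1) + ctr W * (H \<sigma> (2*\<sigma>) * kron V1 V2) + ctr W * (N (2*\<sigma>) * kron (1\<^sub>m m) V2) = ctr W * R3"
    proof -
      have a: "H (2*\<sigma>) \<sigma> * kron V2 V1 \<in> carrier_mat n (m*m*m)" using H21 kV2V1 by simp
      have b: "H \<sigma> (2*\<sigma>) * kron V1 V2 \<in> carrier_mat n (m*m*m)" using H12 kV1V2 by simp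
      have c: "N (2*\<sigma>) * kron (1\<^sub>m m) V2 \<in> carrier_mat n (m*m*m)" using N2 kIV2 by simp
      show ?thesis unfolding R3_def using mult_add_distrib_mat[OF Wc a b] mult_add_distrib_mat[OF Wc _ c, of "H (2*\<sigma>) \<sigma> * kron V2 V1 + H \<sigma> (2*\<sigma>) * kron V1 V2"] a b by simp
    qed
    finally show ?thesis unfolding rK rg rg2 e3 .
  qed
  have rT2: "TF2 (redC C V) (redK K V W) (redB B W) (redN N m V W) (redH H V W) m \<sigma> \<sigma>
     = (C (2*\<sigma>) * V) * sg2 (redK K V W) (redB B W) (redN N m V W) (redH H V W) m \<sigma> \<sigma>"
    unfolding TF2_def rC e2 ..
  have rT3: "TF3 (redC C V) (redK K V W) (redB B W) (redN N m V W) (redH H V W) m \<sigma> \<sigma> \<sigma>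
     = (C (3*\<sigma>) * V) * sg3 (redK K V W) (redB B W) (redN N m V W) (redH H V W) m \<sigma> \<sigma> \<sigma>"
    unfolding TF3_def rC e3 ..
  have dimsV: "\<And>A. A \<in> set [V1, V2, V3] \<Longrightarrow> dim_row A = n" using V1c V2c V3c by auto
  have dimsV': "\<And>A. A \<in> set [V1, V2] \<Longrightarrow> dim_row A = n" using V1c V2c by auto
  have partA: "TF1 C K B \<sigma> = TF1 (redC C V) (redK K V W) (redB B W) \<sigma>
    \<and> TF2 C K B N H m \<sigma> \<sigma> = TF2 (redC C V) (redK K V W) (redB B W) (redN N m V W) (redH H V W) m \<sigma> \<sigma>
    \<and> TF3 C K B N H m \<sigma> \<sigma> \<sigma> = TF3 (redC C V) (redK K V W) (redB B W) (redN N m V W) (redH H V W) m \<sigma> \<sigma> \<sigma>"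
    if ha: "colspan n (hcat n [V1, V2, V3]) \<subseteq> colspan n V"
  proof -
    have s1: "colspan n V1 \<subseteq> colspan n V" using hcat_sub[where As="[V1, V2, V3]" and A=V1 and n=n, OF dimsV]  ha by auto
    have s2: "colspan n V2 \<subseteq> colspan n V" using hcat_sub[where As="[V1, V2, V3]" and A=V2 and n=n, OF dimsV]  ha by auto
    have s3: "colspan n V3 \<subseteq> colspan n V" using hcat_sub[where As="[V1, V2, V3]" and A=V3 and n=n, OF dimsV]  ha by auto
    obtain Y1 where Y1: "Y1 \<in> carrier_mat r m" and eY1: "V1 = V * Y1"
      and rg: "sg1 (redK K V W) (redB B W) \<sigma> = Y1"
      and t1: "TF1 C K B \<sigma> = TF1 (redC C V) (redK K V W) (redB B W) \<sigma>" using P1[OF s1] by blast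
    obtain Y2 where Y2: "Y2 \<in> carrier_mat r (m*m)" and eY2: "V2 = V * Y2"
      using colspan_factor[OF V2c V_dim s2] by blast
    obtain Y3 where Y3: "Y3 \<in> carrier_mat r (m*m*m)" and eY3: "V3 = V * Y3"
      using colspan_factor[OF V3c V_dim s3] by blast
    note rg2 = P2a[OF Y1 eY1 rg Y2 eY2]
    have t2: "TF2 C K B N H m \<sigma> \<sigma> = TF2 (redC C V) (redK K V W) (redB B W) (redN N m V W) (redH H V W) m \<sigma> \<sigma>"
      unfolding T2 rT2 rg2 eY2 using C2 V_dim Y2 by (simp add: assoc_mult_mat)
    have "R3 = K (3*\<sigma>) * V3"
    proof -
      have "K (3*\<sigma>) * V3 = (K (3*\<sigma>) * minv (K (3*\<sigma>))) * R3" unfolding V3'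
        using K3 mk3(3) R3c by (simp add: assoc_mult_mat)
      thus ?thesis using mk3(1) R3c by simp
    qed
    hence rg3: "sg3 (redK K V W) (redB B W) (redN N m V W) (redH H V W) m \<sigma> \<sigma> \<sigma> = (1/2::complex) \<cdot>\<^sub>m Y3"
      unfolding P3[OF Y1 eY1 rg Y2 eY2 rg2] eY3 using oneside[OF K3 V_dim W_dim Kri3 Y3] by simp
    have CV: "C (3*\<sigma>) * V \<in> carrier_mat p r" using C3 V_dim by simp
    have t3: "TF3 C K B N H m \<sigma> \<sigma> \<sigma> = TF3 (redC C V) (redK K V W) (redB B W) (redN N m V W) (redH H V W) m \<sigma> \<sigma> \<sigma>"
      unfolding T3 rT3 rg3 eY3
      using mult_smult_distrib[OF CV Y3] mult_smult_distrib[OF C3 mult_carrier_mat[OF V_dim Y3]]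
        assoc_mult_mat[OF C3 V_dim Y3] by simp
    show ?thesis using t1 t2 t3 by blast
  qed
  have partB: "TF1 C K B \<sigma> = TF1 (redC C V) (redK K V W) (redB B W) \<sigma>
    \<and> TF1 C K B (2*\<sigma>) = TF1 (redC C V) (redK K V W) (redB B W) (2*\<sigma>)
    \<and> TF2 C K B N H m \<sigma> \<sigma> = TF2 (redC C V) (redK K V W) (redB B W) (redN N m V W) (redH H V W) m \<sigma> \<sigma>"
    if hb1: "colspan n V1 \<subseteq> colspan n V" and hb2: "colspan n W1 \<subseteq> colspan n W"
  proof -
    obtain Y1 where Y1: "Y1 \<in> carrier_mat r m" and eY1: "V1 = V * Y1"
      and rg: "sg1 (redK K V W) (redB B W) \<sigma> = Y1"
      and t1: "TF1 C K B \<sigma> = TF1 (redC C V) (redK K V W) (redB B W) \<sigma>" using P1[OF hb1] by blast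
    obtain Z where Z: "Z \<in> carrier_mat r p" and CZ: "C (2*\<sigma>) * minv (K (2*\<sigma>)) = ctr Z * ctr W"
      using wspan[OF C2 K2 Ki2 W_dim] hb2 unfolding W1_def by blast
    have t1b: "TF1 C K B (2*\<sigma>) = TF1 (redC C V) (redK K V W) (redB B W) (2*\<sigma>)"
      unfolding T1b rT1 using twoside[OF C2 K2 Ki2 V_dim W_dim Kri2 Z CZ B2] by simp
    have t2: "TF2 C K B N H m \<sigma> \<sigma> = TF2 (redC C V) (redK K V W) (redB B W) (redN N m V W) (redH H V W) m \<sigma> \<sigma>"
      unfolding T2 rT2 P2[OF Y1 eY1 rg] V2' using twoside[OF C2 K2 Ki2 V_dim W_dim Kri2 Z CZ R2c] by simp
    show ?thesis using t1 t1b t2 by blast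
  qed
  have partC: "TF1 C K B \<sigma> = TF1 (redC C V) (redK K V W) (redB B W) \<sigma>
    \<and> TF1 C K B (3*\<sigma>) = TF1 (redC C V) (redK K V W) (redB B W) (3*\<sigma>)
    \<and> TF2 C K B N H m \<sigma> \<sigma> = TF2 (redC C V) (redK K V W) (redB B W) (redN N m V W) (redH H V W) m \<sigma> \<sigma>
    \<and> TF3 C K B N H m \<sigma> \<sigma> \<sigma> = TF3 (redC C V) (redK K V W) (redB B W) (redN N m V W) (redH H V W) m \<sigma> \<sigma> \<sigma>"
    if hc1: "colspan n (hcat n [V1, V2]) \<subseteq> colspan n V" and hc2: "colspan n W2 \<subseteq> colspan n W"
  proof -
    have s1: "colspan n V1 \<subseteq> colspan n V" using hcat_sub[where As="[V1, V2]" and A=V1 and n=n, OF dimsV']  hc1 by auto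
    have s2: "colspan n V2 \<subseteq> colspan n V" using hcat_sub[where As="[V1, V2]" and A=V2 and n=n, OF dimsV']  hc1 by auto
    obtain Y1 where Y1: "Y1 \<in> carrier_mat r m" and eY1: "V1 = V * Y1"
      and rg: "sg1 (redK K V W) (redB B W) \<sigma> = Y1"
      and t1: "TF1 C K B \<sigma> = TF1 (redC C V) (redK K V W) (redB B W) \<sigma>" using P1[OF s1] by blast
    obtain Y2 where Y2: "Y2 \<in> carrier_mat r (m*m)" and eY2: "V2 = V * Y2"
      using colspan_factor[OF V2c V_dim s2] by blast
    note rg2 = P2a[OF Y1 eY1 rg Y2 eY2]
    have t2: "TF2 C K B N H m \<sigma> \<sigma> = TF2 (redC C V) (redK K V W) (redB B W) (redN N m V W) (redH H V W) m \<sigma> \<sigma>"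
      unfolding T2 rT2 rg2 eY2 using C2 V_dim Y2 by (simp add: assoc_mult_mat)
    obtain Z where Z: "Z \<in> carrier_mat r p" and CZ: "C (3*\<sigma>) * minv (K (3*\<sigma>)) = ctr Z * ctr W"
      using wspan[OF C3 K3 Ki3 W_dim] hc2 unfolding W2_def by blast
    have t1c: "TF1 C K B (3*\<sigma>) = TF1 (redC C V) (redK K V W) (redB B W) (3*\<sigma>)"
      unfolding T1c rT1 using twoside[OF C3 K3 Ki3 V_dim W_dim Kri3 Z CZ B3] by simp
    have CV: "C (3*\<sigma>) * V \<in> carrier_mat p r" using C3 V_dim by simp
    have M3: "minv (ctr W * K (3*\<sigma>) * V) * (ctr W * R3) \<in> carrier_mat r (m*m*m)"
      using mr3(3) Wc R3c by simp
    have t3: "TF3 C K B N H m \<sigma> \<sigma> \<sigma> = TF3 (redC C V) (redK K V W) (redB B W) (redN N m V W) (redH H V W) m \<sigma> \<sigma> \<sigma>"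
      unfolding T3 rT3 P3[OF Y1 eY1 rg Y2 eY2 rg2] V3'
      using mult_smult_distrib[OF CV M3] mult_smult_distrib[OF C3 mult_carrier_mat[OF mk3(3) R3c]]
        twoside[OF C3 K3 Ki3 V_dim W_dim Kri3 Z CZ R3c] by simp
    show ?thesis using t1 t1c t2 t3 by blast
  qed
  show ?thesis using partA partB partC by blast
qed


end
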